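(* Let $n\ge3$, $\alpha<1$, $\beta\in[0,\pi]$ and $\rho\in[0,1)$. Define $$C_{\alpha,\infty}(\rho e_1;l_\beta)=\max_{\zeta\in\mathbb{S}^{n-1}}\frac{\big|(n-\alpha)(1-\rho^2)\sin\beta\,\zeta_2-\big((2-3\alpha+n)\rho+(2-\alpha-n)\rho^3+(\alpha-n+(-4+3\alpha+n)\rho^2)\zeta_1\big)\cos\beta\big|}{|\rho e_1-\zeta|^{n+2-\alpha}},$$ where $\zeta=(\zeta_1,\dots,\zeta_n)$. Then $\mathbf{C}_{\alpha,\infty}(\rho e_1;l_\beta)=C_{n,\alpha}(1-\rho^2)^{-\alpha}C_{\alpha,\infty}(\rho e_1;l_\beta)$.
   Context: $\mathbb{B}^n$ is the open unit ball of $\mathbb{R}^n$, $\mathbb{S}^{n-1}$ the unit sphere with normalized surface measure $\sigma$; $e_i$ is the $i$-th standard unit vector, $l_\beta=\cos\beta\,e_1+\sin\beta\,e_2$. For $\alpha<1$, $P_\alpha(x,\zeta)=C_{n,\alpha}\frac{(1-|x|^2)^{1-\alpha}}{|x-\zeta|^{n-\alpha}}$ with $C_{n,\alpha}=\frac{\Gamma(\frac{n-\alpha}{2})\Gamma(1-\frac\alpha2)}{\Gamma(\frac n2)\Gamma(1-\alpha)}$, and $P_\alpha[\phi](x)=\int_{\mathbb{S}^{n-1}}P_\alpha(x,\zeta)\phi(\zeta)\,d\sigma(\zeta)$. $\mathbf{C}_{\alpha,\infty}(x;l)$ denotes the smallest constant such that $|\langle\nabla u(x),l\rangle|\le \mathbf{C}_{\alpha,\infty}(x;l)\|\phi\|_{L^1(\mathbb{S}^{n-1},\mathbb{R})}$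 for all $\phi\in L^1(\mathbb{S}^{n-1},\mathbb{R})$, where $u=P_\alpha[\phi]$. *)

theory Defs
  imports "HOL-Analysis.Analysis"
begin

text \<open>Normalized surface measure on the unit sphere of real^'n, realised as the cone
  measure: push-forward of the normalized Lebesgue measure on the unit ball under
  radial projection x |-> x / |x|.\<close>
definition sphere_measure :: "(real^'n) measure" where
  "sphere_measure = distr (uniform_measure lborel (ball 0 1)) borel (\<lambda>x. x /\<^sub>R norm x)"

definition C_const :: "nat \<Rightarrow> real \<Rightarrow> real" where
  "C_const n \<alpha> = Gamma ((real n - \<alpha>) / 2) * Gamma (1 - \<alpha> / 2)
                   / (Gamma (real n / 2) * Gamma (1 - \<alpha>))"

definition P_kernel :: "real \<Rightarrow> real^'n \<Rightarrow> real^'n \<Rightarrow> real" where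
  "P_kernel \<alpha> x \<zeta> = C_const CARD('n) \<alpha> * (1 - (norm x)\<^sup>2) powr (1 - \<alpha>)
                      / norm (x - \<zeta>) powr (real CARD('n) - \<alpha>)"

definition P_transform :: "real \<Rightarrow> (real^'n \<Rightarrow> real) \<Rightarrow> real^'n \<Rightarrow> real" where
  "P_transform \<alpha> \<phi> x = (LINT \<zeta>|sphere_measure. P_kernel \<alpha> x \<zeta> * \<phi> \<zeta>)"

definition L1_norm :: "(real^'n \<Rightarrow> real) \<Rightarrow> real" where
  "L1_norm \<phi> = (LINT \<zeta>|sphere_measure. \<bar>\<phi> \<zeta>\<bar>)"

definition admissible_consts :: "real \<Rightarrow> real^'n \<Rightarrow> real^'n \<Rightarrow> real set" where
  "admissible_consts \<alpha> x l = {C. \<forall>\<phi>. integrable sphere_measure \<phi> \<longrightarrow>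
      \<bar>frechet_derivative (P_transform \<alpha> \<phi>) (at x) l\<bar> \<le> C * L1_norm \<phi>}"

end

theory Submission
  imports Defs "HOL-Probability.Probability"
begin

lemma lborel_ball_pos: "r > 0 \<Longrightarrow> emeasure lborel (ball (c::'a::euclidean_space) r) > 0"
  by (simp add: emeasure_ball)


lemma ball01_pos: "emeasure lborel (ball (0::real^'n) 1) \<noteq> 0"
  "emeasure lborel (ball (0::real^'n) 1) \<noteq> \<infinity>"
  using lborel_ball_pos[of 1 "0::real^'n"] emeasure_lborel_ball_finite[of "0::real^'n" 1] by auto

lemma sm_sets[simp, measurable_cong]: "sets (sphere_measure :: (real^'n) measure) = sets borel"
  unfolding sphere_measure_def by simp

lemma sm_space[simp]: "space (sphere_measure :: (real^'n) measure) = UNIV"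
  unfolding sphere_measure_def by simp

lemma sm_prob: "prob_space (sphere_measure :: (real^'n) measure)"
  unfolding sphere_measure_def
  apply (rule prob_space.prob_space_distr)
  apply (rule prob_space_uniform_measure[OF ball01_pos])
  apply simp
  done

lemma sm_AE: "AE \<zeta> in (sphere_measure :: (real^'n) measure). norm \<zeta> = 1"
  unfolding sphere_measure_def
  apply (subst AE_distr_iff)
  apply simp
  apply simp
  apply (rule AE_uniform_measureI)
   apply simp
  using AE_lborel_singleton[of 0]
  apply eventually_elim
  apply auto
  done


lemma sm_ball_pos:
  fixes z0 :: "real^'n"
  assumes "norm z0 = 1" "d > 0"
  shows "emeasure sphere_measure (ball z0 d) > 0"
proof -
  define r where "r = min (1/4) (d/8)"
  have r: "r > 0" "r \<le> 1/4" "4*r < d" using assms by (auto simp: r_def)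
  have sub: "ball (z0 /\<^sub>R 2) r \<subseteq> ball 0 1 \<inter> (\<lambda>x. x /\<^sub>R norm x) -` ball z0 d"
  proof
    fix y assume y: "y \<in> ball (z0 /\<^sub>R 2) r"
    have ny: "\<bar>norm y - 1/2\<bar> < r"
    proof -
      have "\<bar>norm y - norm (z0 /\<^sub>R 2)\<bar> \<le> norm (y - z0 /\<^sub>R 2)" by (rule norm_triangle_ineq3)
      moreover have "norm (z0 /\<^sub>R 2) = 1/2" using assms by simp
      ultimately show ?thesis using y by (simp add: dist_norm norm_minus_commute)
    qed
    have yp: "norm y > 0" using ny r by linarith
    have "norm (y /\<^sub>R norm y - z0) \<le> norm (y /\<^sub>R norm y - 2 *\<^sub>R y) + norm (2 *\<^sub>R y - z0)"
      using norm_triangle_ineq[of "y /\<^sub>R norm y - 2 *\<^sub>R y" "2 *\<^sub>R y - z0"] by simp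
    also have "norm (y /\<^sub>R norm y - 2 *\<^sub>R y) = \<bar>1 - 2 * norm y\<bar>"
    proof -
      have "y /\<^sub>R norm y - 2 *\<^sub>R y = (1 / norm y - 2) *\<^sub>R y" by (simp add: algebra_simps divide_inverse)
      then have "norm (y /\<^sub>R norm y - 2 *\<^sub>R y) = \<bar>1 / norm y - 2\<bar> * norm y" by simp
      also have "\<dots> = \<bar>(1 / norm y - 2) * norm y\<bar>" using yp by (simp add: abs_mult)
      also have "(1 / norm y - 2) * norm y = 1 - 2 * norm y" using yp by (simp add: field_simps)
      finally show ?thesis .
    qed
    also have "norm (2 *\<^sub>R y - z0) = 2 * norm (y - z0 /\<^sub>R 2)"
    proof -
      have "2 *\<^sub>R y - z0 = 2 *\<^sub>R (y - z0 /\<^sub>R 2)" by (simp add: algebra_simps)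
      then show ?thesis by simp
    qed
    finally have "norm (y /\<^sub>R norm y - z0) < d"
      using ny y r by (simp add: dist_norm norm_minus_commute)
    moreover have "norm y < 1" using ny r by linarith
    ultimately show "y \<in> ball 0 1 \<inter> (\<lambda>x. x /\<^sub>R norm x) -` ball z0 d"
      by (simp add: dist_norm norm_minus_commute)
  qed
  have f: "(\<lambda>x::real^'n. x /\<^sub>R norm x) \<in> borel_measurable borel" by measurable
  have vm: "(\<lambda>x::real^'n. x /\<^sub>R norm x) -` ball z0 d \<in> sets borel"
      using measurable_sets_borel[OF f, of "ball z0 d"] by simp
  have "0 < emeasure lborel (ball (z0 /\<^sub>R 2) r)" using r by (simp add: emeasure_ball)
  also have "\<dots> \<le> emeasure lborel (ball 0 1 \<inter> (\<lambda>x. x /\<^sub>R norm x) -` ball z0 d)"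
    using vm by (intro emeasure_mono[OF sub]) auto
  finally have pos: "0 < emeasure lborel (ball (0::real^'n) 1 \<inter> (\<lambda>x. x /\<^sub>R norm x) -` ball z0 d)" .
  have fin: "emeasure lborel (ball (0::real^'n) 1) < \<infinity>" by (rule emeasure_lborel_ball_finite)
  have "emeasure sphere_measure (ball z0 d) =
     emeasure (uniform_measure lborel (ball (0::real^'n) 1)) ((\<lambda>x. x /\<^sub>R norm x) -` ball z0 d)"
    unfolding sphere_measure_def by (subst emeasure_distr) auto
  also have "\<dots> = emeasure lborel (ball 0 1 \<inter> (\<lambda>x. x /\<^sub>R norm x) -` ball z0 d) / emeasure lborel (ball (0::real^'n) 1)"
    using vm by (subst emeasure_uniform_measure) auto
  finally show ?thesis using pos fin
    by (simp add: ennreal_zero_less_divide) 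
qed


definition g1 :: "real \<Rightarrow> real^'n \<Rightarrow> real" where
  "g1 a y = (1 - (norm y)\<^sup>2) powr (1 - a)"
definition g2 :: "real \<Rightarrow> real^'n \<Rightarrow> real^'n \<Rightarrow> real" where
  "g2 a y z = norm (y - z) powr (a - real CARD('n))"
definition dg1 :: "real \<Rightarrow> real^'n \<Rightarrow> real^'n" where
  "dg1 a y = ((1 - a) * (1 - (norm y)\<^sup>2) powr (1 - a - 1)) *\<^sub>R (- (2 *\<^sub>R y))"
definition dg2 :: "real \<Rightarrow> real^'n \<Rightarrow> real^'n \<Rightarrow> real^'n" where
  "dg2 a y z = ((a - real CARD('n)) * norm (y - z) powr (a - real CARD('n) - 1)) *\<^sub>R sgn (y - z)"
definition Gr :: "real \<Rightarrow> real^'n \<Rightarrow> real^'n \<Rightarrow> real^'n" where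
  "Gr a y z = C_const CARD('n) a *\<^sub>R (g1 a y *\<^sub>R dg2 a y z + g2 a y z *\<^sub>R dg1 a y)"

lemma kernel_eq: "P_kernel a y z = C_const CARD('n) a * g1 a y * g2 a y (z::real^'n)"
  unfolding P_kernel_def g1_def g2_def
  using powr_minus[of "norm (y - z)" "real CARD('n) - a"]
  by (simp add: divide_inverse)

lemma gd_g1: "norm (y::real^'n) < 1 \<Longrightarrow> GDERIV (g1 a) y :> dg1 a y"
proof -
  assume y: "norm y < 1"
  have "GDERIV (\<lambda>y. 1 - (norm y)\<^sup>2) y :> - (2 *\<^sub>R y)"
    unfolding gderiv_def
    by (rule has_derivative_eq_rhs[OF has_derivative_diff[OF has_derivative_const has_derivative_sqnorm_at]])
       (auto simp: inner_commute)
  moreover have "DERIV (\<lambda>t. t powr (1 - a)) (1 - (norm y)\<^sup>2) :> (1 - a) * (1 - (norm y)\<^sup>2) powr (1 - a - 1)"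
    apply (rule has_real_derivative_powr)
    using y by (simp add: abs_square_less_1)
  ultimately show ?thesis
    unfolding g1_def dg1_def by (rule GDERIV_DERIV_compose)
qed

lemma gd_g2: "y \<noteq> z \<Longrightarrow> GDERIV (\<lambda>y. g2 a y (z::real^'n)) y :> dg2 a y z"
proof -
  assume y: "y \<noteq> z"
  have "GDERIV (\<lambda>y. norm (y - z)) y :> sgn (y - z)"
    unfolding gderiv_def
    using has_derivative_compose[OF has_derivative_diff[OF has_derivative_ident has_derivative_const] has_derivative_norm[of "y - z"]] y
    by simp
  moreover have "DERIV (\<lambda>t. t powr (a - real CARD('n))) (norm (y - z)) :> (a - real CARD('n)) * norm (y - z) powr (a - real CARD('n) - 1)"
    apply (rule has_real_derivative_powr)
    using y by simp
  ultimately show ?thesis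
    unfolding g2_def dg2_def by (rule GDERIV_DERIV_compose)
qed

lemma kernel_deriv:
  assumes "norm (y::real^'n) < 1" "y \<noteq> z"
  shows "((\<lambda>y. P_kernel a y z) has_derivative (\<lambda>v. v \<bullet> Gr a y z)) (at y)"
proof -
  have "GDERIV (\<lambda>y. g1 a y * g2 a y z) y :> g1 a y *\<^sub>R dg2 a y z + g2 a y z *\<^sub>R dg1 a y"
    by (rule GDERIV_mult[OF gd_g1[OF assms(1)] gd_g2[OF assms(2)]])
  then have "((\<lambda>y. C_const CARD('n) a * (g1 a y * g2 a y z)) has_derivative
     (\<lambda>v. C_const CARD('n) a * (v \<bullet> (g1 a y *\<^sub>R dg2 a y z + g2 a y z *\<^sub>R dg1 a y)))) (at y)"
    unfolding gderiv_def by (rule has_derivative_mult_right)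
  then show ?thesis
    unfolding kernel_eq Gr_def by (simp add: mult.assoc)
qed



lemma Gr_cont: "continuous_on {p::(real^'n)\<times>(real^'n). norm (fst p) < 1 \<and> fst p \<noteq> snd p} (\<lambda>p. Gr a (fst p) (snd p))"
  unfolding Gr_def g1_def g2_def dg1_def dg2_def sgn_div_norm
  apply (intro continuous_intros)
  apply (auto simp: abs_square_less_1 power2_eq_1_iff)
  apply (metis norm_ge_zero neg_0_le_iff_le not_one_le_zero)+
  done

lemma P_cont: "continuous_on {p::(real^'n)\<times>(real^'n). norm (fst p) < 1 \<and> fst p \<noteq> snd p} (\<lambda>p. P_kernel a (fst p) (snd p))"
  unfolding kernel_eq g1_def g2_def
  apply (intro continuous_intros)
  apply (auto simp: abs_square_less_1 power2_eq_1_iff)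
  apply (metis norm_ge_zero neg_0_le_iff_le not_one_le_zero)+
  done



lemma meas_P: "(\<lambda>z. P_kernel a y z) \<in> borel_measurable (borel :: (real^'n) measure)"
  unfolding P_kernel_def by measurable

lemma meas_Gr: "(\<lambda>z. Gr a y z) \<in> borel_measurable (borel :: (real^'n) measure)"
  unfolding Gr_def g1_def g2_def dg1_def dg2_def sgn_div_norm by measurable

lemma int_bdd:
  fixes f \<phi> :: "'a \<Rightarrow> real"
  assumes "integrable M \<phi>" "f \<in> borel_measurable M" "AE z in M. \<bar>f z\<bar> \<le> B"
  shows "integrable M (\<lambda>z. f z * \<phi> z)"
proof (rule Bochner_Integration.integrable_bound[where f="\<lambda>z. \<bar>B\<bar> * \<phi> z"])
  show "integrable M (\<lambda>z. \<bar>B\<bar> * \<phi> z)" using assms(1) by simp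
  show "(\<lambda>z. f z * \<phi> z) \<in> borel_measurable M" using assms borel_measurable_integrable by measurable
  show "AE z in M. norm (f z * \<phi> z) \<le> norm (\<bar>B\<bar> * \<phi> z)"
    using assms(3) by eventually_elim (auto simp: abs_mult intro!: mult_right_mono)
qed

lemma int_bdd_vec:
  fixes f :: "'a \<Rightarrow> 'b::{banach, second_countable_topology}" and \<phi> :: "'a \<Rightarrow> real"
  assumes "integrable M \<phi>" "f \<in> borel_measurable M" "AE z in M. norm (f z) \<le> B"
  shows "integrable M (\<lambda>z. \<phi> z *\<^sub>R f z)"
proof (rule Bochner_Integration.integrable_bound[where f="\<lambda>z. \<bar>B\<bar> * \<phi> z"])
  show "integrable M (\<lambda>z. \<bar>B\<bar> * \<phi> z)" using assms(1) by simp
  show "(\<lambda>z. \<phi> z *\<^sub>R f z) \<in> borel_measurable M" using assms borel_measurable_integrable by measurable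
  show "AE z in M. norm (\<phi> z *\<^sub>R f z) \<le> norm (\<bar>B\<bar> * \<phi> z)"
    using assms(3) apply (rule eventually_mono)
    proof -
      fix z assume h: "norm (f z) \<le> B"
      have "norm (\<phi> z *\<^sub>R f z) = \<bar>\<phi> z\<bar> * norm (f z)" by simp
      also have "\<dots> \<le> \<bar>\<phi> z\<bar> * \<bar>B\<bar>" using h by (intro mult_left_mono) auto
      also have "\<dots> = norm (\<bar>B\<bar> * \<phi> z)" by (simp add: abs_mult)
      finally show "norm (\<phi> z *\<^sub>R f z) \<le> norm (\<bar>B\<bar> * \<phi> z)" .
    qed
qed



lemma deriv_int:
  fixes x :: "real^'n" and \<phi> :: "real^'n \<Rightarrow> real"
  assumes x: "norm x < 1" and \<phi>: "integrable sphere_measure \<phi>"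
  shows "(P_transform a \<phi> has_derivative (\<lambda>v. (\<integral>z. \<phi> z *\<^sub>R Gr a x z \<partial>sphere_measure) \<bullet> v)) (at x)"
proof -
  define M where "M = (sphere_measure :: (real^'n) measure)"
  have \<phi>M: "integrable M \<phi>" using \<phi> by (simp add: M_def)
  have AE1: "AE z in M. norm z = 1" unfolding M_def by (rule sm_AE)
  have setsM: "sets M = sets borel" by (simp add: M_def)
  define r where "r = (1 - norm x)/2"
  have r: "r > 0" using x by (simp add: r_def)
  define T where "T = cball x r \<times> sphere (0::real^'n) 1"
  have cT: "compact T" unfolding T_def by (intro compact_Times) auto
  have Tsub: "T \<subseteq> {p. norm (fst p) < 1 \<and> fst p \<noteq> snd p}"
  proof (clarsimp simp: T_def)
    fix y z :: "real^'n" assume "dist x y \<le> r" "norm z = 1"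
    moreover have "norm y \<le> norm x + dist x y"
      by (metis dist_norm norm_minus_commute norm_triangle_sub)
    ultimately have "norm y < 1" using x by (simp add: r_def)
    then show "norm y < 1 \<and> y \<noteq> z" using \<open>norm z = 1\<close> by auto
  qed
  have inT: "(y, z) \<in> T" if "y \<in> cball x r" "norm z = 1" for y z
    using that by (simp add: T_def)
  have contG: "continuous_on T (\<lambda>p. Gr a (fst p) (snd p))"
    using Gr_cont Tsub continuous_on_subset by blast
  have contP: "continuous_on T (\<lambda>p. P_kernel a (fst p) (snd p))"
    using P_cont Tsub continuous_on_subset by blast
  have uc: "uniformly_continuous_on T (\<lambda>p. Gr a (fst p) (snd p))"
    using compact_uniformly_continuous[OF contG cT] .
  obtain BG where BG: "\<And>p. p \<in> T \<Longrightarrow> norm (Gr a (fst p) (snd p)) \<le> BG"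
    using compact_imp_bounded[OF compact_continuous_image[OF contG cT]]
    unfolding bounded_iff by auto
  obtain BP where BP: "\<And>p. p \<in> T \<Longrightarrow> norm (P_kernel a (fst p) (snd p)) \<le> BP"
    using compact_imp_bounded[OF compact_continuous_image[OF contP cT]]
    unfolding bounded_iff by auto
  have measP: "(\<lambda>z. P_kernel a y z) \<in> borel_measurable M" for y
    using meas_P measurable_cong_sets[OF setsM refl] by blast
  have measG: "(\<lambda>z. Gr a y z) \<in> borel_measurable M" for y
    using meas_Gr measurable_cong_sets[OF setsM refl] by blast
  have intP: "integrable M (\<lambda>z. P_kernel a y z * \<phi> z)" if "y \<in> cball x r" for y
  proof (rule int_bdd[OF \<phi>M measP])
    show "AE z in M. \<bar>P_kernel a y z\<bar> \<le> BP"
      using AE1 apply (rule eventually_mono)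
      using BP inT that by fastforce
  qed
  have intG: "integrable M (\<lambda>z. \<phi> z *\<^sub>R Gr a x z)"
  proof (rule int_bdd_vec[OF \<phi>M measG])
    show "AE z in M. norm (Gr a x z) \<le> BG"
      using AE1 apply (rule eventually_mono)
      using BG inT r by fastforce
  qed
  define W where "W = (\<integral>z. \<phi> z *\<^sub>R Gr a x z \<partial>M)"
  define N where "N = (\<integral>z. \<bar>\<phi> z\<bar> \<partial>M)"
  have N0: "N \<ge> 0" unfolding N_def by simp
  have "(P_transform a \<phi> has_derivative (\<lambda>v. W \<bullet> v)) (at x)"
    unfolding has_derivative_at_alt
  proof (intro conjI allI impI)
    show "bounded_linear ((\<bullet>) W)" by (rule bounded_linear_inner_right)
    fix e :: real assume e: "e > 0"
    define \<epsilon> where "\<epsilon> = e / (N + 1)"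
    have \<epsilon>: "\<epsilon> > 0" using e N0 by (simp add: \<epsilon>_def)
    have \<epsilon>N: "\<epsilon> * N \<le> e" using e N0 by (simp add: \<epsilon>_def field_simps)
    obtain \<delta> where \<delta>: "\<delta> > 0" and
      \<delta>uc: "\<And>p p'. p \<in> T \<Longrightarrow> p' \<in> T \<Longrightarrow> dist p' p < \<delta> \<Longrightarrow>
          dist (Gr a (fst p') (snd p')) (Gr a (fst p) (snd p)) < \<epsilon>"
      using uc \<epsilon> unfolding uniformly_continuous_on_def by metis
    define d where "d = min \<delta> r"
    have d: "d > 0" using \<delta> r by (simp add: d_def)
    show "\<exists>d>0. \<forall>y. norm (y - x) < d \<longrightarrow>
        norm (P_transform a \<phi> y - P_transform a \<phi> x - W \<bullet> (y - x)) \<le> e * norm (y - x)"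
    proof (intro exI[of _ d] conjI allI impI d)
      fix y assume y: "norm (y - x) < d"
      have yb: "y \<in> cball x r" using y by (simp add: d_def dist_norm norm_minus_commute)
      have pw: "\<bar>P_kernel a y z - P_kernel a x z - (y - x) \<bullet> Gr a x z\<bar> \<le> \<epsilon> * norm (y - x)"
        if z: "norm z = 1" for z
      proof -
        define f where "f = (\<lambda>w. P_kernel a w z - w \<bullet> Gr a x z)"
        have "norm (f y - f x) \<le> \<epsilon> * norm (y - x)"
        proof (rule differentiable_bound[where S="ball x d" and f'="\<lambda>w v. v \<bullet> Gr a w z - v \<bullet> Gr a x z"])
          show "convex (ball x d)" by simp
          show "x \<in> ball x d" using d by simp
          show "y \<in> ball x d" using y by (simp add: dist_norm norm_minus_commute)
          fix w assume w: "w \<in> ball x d"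
          have wb: "w \<in> cball x r" using w by (simp add: d_def)
          have wT: "(w, z) \<in> T" using inT[OF wb z] .
          then have "norm w < 1" "w \<noteq> z" using Tsub by auto
          then have "((\<lambda>w. P_kernel a w z) has_derivative (\<lambda>v. v \<bullet> Gr a w z)) (at w)"
            by (rule kernel_deriv)
          then have "(f has_derivative (\<lambda>v. v \<bullet> Gr a w z - v \<bullet> Gr a x z)) (at w)"
            unfolding f_def
            by (intro has_derivative_diff bounded_linear.has_derivative[OF bounded_linear_inner_left] has_derivative_ident)
          then show "(f has_derivative (\<lambda>v. v \<bullet> Gr a w z - v \<bullet> Gr a x z)) (at w within ball x d)"
            by (rule has_derivative_at_withinI)
          have xT: "(x, z) \<in> T" using inT[OF _ z] r by simp
          have dG: "norm (Gr a w z - Gr a x z) \<le> \<epsilon>"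
          proof -
            have "dist (w, z) (x, z) < \<delta>" using w by (simp add: dist_Pair_Pair d_def dist_commute)
            from \<delta>uc[OF xT wT this] show ?thesis by (simp add: dist_norm)
          qed
          show "onorm (\<lambda>v. v \<bullet> Gr a w z - v \<bullet> Gr a x z) \<le> \<epsilon>"
          proof (rule onorm_le)
            fix v :: "real^'n"
            have "norm (v \<bullet> Gr a w z - v \<bullet> Gr a x z) = \<bar>v \<bullet> (Gr a w z - Gr a x z)\<bar>"
              by (simp add: inner_diff_right)
            also have "\<dots> \<le> norm v * norm (Gr a w z - Gr a x z)" by (rule Cauchy_Schwarz_ineq2)
            also have "\<dots> \<le> norm v * \<epsilon>" using dG by (intro mult_left_mono) auto
            finally show "norm (v \<bullet> Gr a w z - v \<bullet> Gr a x z) \<le> \<epsilon> * norm v" by (simp add: mult.commute)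
          qed
        qed
        then show ?thesis by (simp add: f_def inner_diff_left algebra_simps)
      qed
      have xb: "x \<in> cball x r" using r by simp
      have i3: "integrable M (\<lambda>z. (\<phi> z *\<^sub>R Gr a x z) \<bullet> (y - x))"
        using intG by (rule integrable_inner_left)
      have eq: "P_transform a \<phi> y - P_transform a \<phi> x - W \<bullet> (y - x) =
         (\<integral>z. (P_kernel a y z * \<phi> z - P_kernel a x z * \<phi> z) - (\<phi> z *\<^sub>R Gr a x z) \<bullet> (y - x) \<partial>M)"
      proof -
        have e1: "(\<integral>z. (P_kernel a y z * \<phi> z - P_kernel a x z * \<phi> z) - (\<phi> z *\<^sub>R Gr a x z) \<bullet> (y - x) \<partial>M)
          = (\<integral>z. P_kernel a y z * \<phi> z - P_kernel a x z * \<phi> z \<partial>M) - (\<integral>z. (\<phi> z *\<^sub>R Gr a x z) \<bullet> (y - x) \<partial>M)"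
          by (rule Bochner_Integration.integral_diff[OF Bochner_Integration.integrable_diff[OF intP[OF yb] intP[OF xb]] i3])
        have e2: "(\<integral>z. P_kernel a y z * \<phi> z - P_kernel a x z * \<phi> z \<partial>M)
           = (\<integral>z. P_kernel a y z * \<phi> z \<partial>M) - (\<integral>z. P_kernel a x z * \<phi> z \<partial>M)"
          by (rule Bochner_Integration.integral_diff[OF intP[OF yb] intP[OF xb]])
        have e3: "(\<integral>z. (\<phi> z *\<^sub>R Gr a x z) \<bullet> (y - x) \<partial>M) = W \<bullet> (y - x)"
          unfolding W_def by (rule integral_inner_left[OF intG])
        show ?thesis unfolding P_transform_def M_def[symmetric] unfolding e1 e2 e3 ..
      qed
      have "\<bar>\<integral>z. (P_kernel a y z * \<phi> z - P_kernel a x z * \<phi> z) - (\<phi> z *\<^sub>R Gr a x z) \<bullet> (y - x) \<partial>M\<bar>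
          \<le> (\<integral>z. \<bar>(P_kernel a y z * \<phi> z - P_kernel a x z * \<phi> z) - (\<phi> z *\<^sub>R Gr a x z) \<bullet> (y - x)\<bar> \<partial>M)"
        by (rule integral_abs_bound)
      also have "\<dots> \<le> (\<integral>z. (\<epsilon> * norm (y - x)) * \<bar>\<phi> z\<bar> \<partial>M)"
      proof (rule integral_mono_AE)
        show "integrable M (\<lambda>z. \<bar>(P_kernel a y z * \<phi> z - P_kernel a x z * \<phi> z) - (\<phi> z *\<^sub>R Gr a x z) \<bullet> (y - x)\<bar>)"
          by (rule integrable_abs[OF Bochner_Integration.integrable_diff[OF Bochner_Integration.integrable_diff[OF intP[OF yb] intP[OF xb]] i3]])
        show "integrable M (\<lambda>z. (\<epsilon> * norm (y - x)) * \<bar>\<phi> z\<bar>)" using \<phi>M by auto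
        show "AE z in M. \<bar>(P_kernel a y z * \<phi> z - P_kernel a x z * \<phi> z) - (\<phi> z *\<^sub>R Gr a x z) \<bullet> (y - x)\<bar>
            \<le> (\<epsilon> * norm (y - x)) * \<bar>\<phi> z\<bar>"
          using AE1
        proof (rule eventually_mono)
          fix z :: "real^'n" assume z: "norm z = 1"
          have "(P_kernel a y z * \<phi> z - P_kernel a x z * \<phi> z) - (\<phi> z *\<^sub>R Gr a x z) \<bullet> (y - x)
              = (P_kernel a y z - P_kernel a x z - (y - x) \<bullet> Gr a x z) * \<phi> z"
            by (simp add: algebra_simps inner_commute)
          then have "\<bar>(P_kernel a y z * \<phi> z - P_kernel a x z * \<phi> z) - (\<phi> z *\<^sub>R Gr a x z) \<bullet> (y - x)\<bar>
              = \<bar>P_kernel a y z - P_kernel a x z - (y - x) \<bullet> Gr a x z\<bar> * \<bar>\<phi> z\<bar>"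
            by (simp add: abs_mult)
          also have "\<dots> \<le> (\<epsilon> * norm (y - x)) * \<bar>\<phi> z\<bar>"
            using pw[OF z] by (intro mult_right_mono) auto
          finally show "\<bar>(P_kernel a y z * \<phi> z - P_kernel a x z * \<phi> z) - (\<phi> z *\<^sub>R Gr a x z) \<bullet> (y - x)\<bar>
            \<le> (\<epsilon> * norm (y - x)) * \<bar>\<phi> z\<bar>" .
        qed
      qed
      also have "\<dots> = (\<epsilon> * N) * norm (y - x)" by (simp add: N_def)
      also have "\<dots> \<le> e * norm (y - x)" using \<epsilon>N by (intro mult_right_mono) auto
      finally show "norm (P_transform a \<phi> y - P_transform a \<phi> x - W \<bullet> (y - x)) \<le> e * norm (y - x)"
        using eq by simp
    qed
  qed
  then show ?thesis by (simp add: W_def M_def)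
qed



lemma alg_id:
  fixes q d a n C \<rho> z1 z2 cb sb :: real
  assumes q: "q = 1 - \<rho>\<^sup>2" "q > 0" and d: "d > 0" and dd: "d\<^sup>2 = 1 + \<rho>\<^sup>2 - 2 * \<rho> * z1"
  shows "C * (q powr (1 - a) * ((a - n) * d powr (a - n - 1)) * ((\<rho> * cb - z1 * cb - z2 * sb) / d)
        + d powr (a - n) * ((1 - a) * q powr (1 - a - 1)) * (- 2 * (\<rho> * cb)))
       = C * q powr (- a) * ((n - a) * (1 - \<rho>\<^sup>2) * sb * z2
        - ((2 - 3*a + n) * \<rho> + (2 - a - n) * \<rho> ^ 3
           + (a - n + (-4 + 3*a + n) * \<rho>\<^sup>2) * z1) * cb) / d powr (n + 2 - a)" (is "?L = ?R")
proof -
  have e1: "q powr (1 - a) = q * q powr (- a)"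
  proof -
    have "q powr (1 - a) = q powr (1 + (- a))" by simp
    also have "\<dots> = q powr 1 * q powr (- a)" by (rule powr_add)
    finally show ?thesis using q by simp
  qed
  have e2: "q powr (1 - a - 1) = q powr (- a)" by simp
  have e3: "d powr (a - n - 1) = d * d powr (a - n - 2)"
  proof -
    have "d powr (a - n - 1) = d powr (1 + (a - n - 2))" by (simp add: algebra_simps)
    also have "\<dots> = d powr 1 * d powr (a - n - 2)" by (rule powr_add)
    finally show ?thesis using d by simp
  qed
  have e4: "d powr (a - n) = d\<^sup>2 * d powr (a - n - 2)"
  proof -
    have "d powr (a - n) = d powr (2 + (a - n - 2))" by (simp add: algebra_simps)
    also have "\<dots> = d powr 2 * d powr (a - n - 2)" by (rule powr_add)
    finally show ?thesis using d by (simp add: powr_numeral)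
  qed
  have e5: "d powr (a - n - 2) = 1 / d powr (n + 2 - a)"
  proof -
    have "d powr (a - n - 2) = d powr (- (n + 2 - a))" by (simp add: algebra_simps)
    also have "\<dots> = 1 / d powr (n + 2 - a)" by (rule powr_minus_divide)
    finally show ?thesis .
  qed
  have pd: "d powr (n + 2 - a) > 0" using d by simp
  define Bk where "Bk = q * (a - n) * (\<rho> * cb - z1 * cb - z2 * sb) - 2 * (1 - a) * d\<^sup>2 * (\<rho> * cb)"
  have B: "Bk = (n - a) * (1 - \<rho>\<^sup>2) * sb * z2
        - ((2 - 3*a + n) * \<rho> + (2 - a - n) * \<rho> ^ 3
           + (a - n + (-4 + 3*a + n) * \<rho>\<^sup>2) * z1) * cb"
    unfolding Bk_def dd q(1) by (simp add: algebra_simps power2_eq_square power3_eq_cube)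
  have "?L = C * q powr (- a) / d powr (n + 2 - a) * Bk"
    unfolding e1 e2 e3 e4 e5 Bk_def using d pd by (simp add: field_simps)
  also have "\<dots> = ?R" unfolding B by simp
  finally show ?thesis .
qed



lemma Gr_l:
  fixes \<zeta> :: "real^'n" and i1 i2 :: 'n and \<beta> \<rho> :: real
  assumes "i1 \<noteq> i2" "0 \<le> \<rho>" "\<rho> < 1" "norm \<zeta> = 1"
  defines "x \<equiv> \<rho> *\<^sub>R (axis i1 1 :: real^'n)"
    and "l \<equiv> cos \<beta> *\<^sub>R (axis i1 1 :: real^'n) + sin \<beta> *\<^sub>R axis i2 1"
    and "n \<equiv> real CARD('n)"
  shows "Gr a x \<zeta> \<bullet> l = C_const CARD('n) a * (1 - \<rho>\<^sup>2) powr (- a) *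
      ((n - a) * (1 - \<rho>\<^sup>2) * sin \<beta> * \<zeta> $ i2
        - ((2 - 3*a + n) * \<rho> + (2 - a - n) * \<rho> ^ 3
           + (a - n + (-4 + 3*a + n) * \<rho>\<^sup>2) * \<zeta> $ i1) * cos \<beta>) / norm (x - \<zeta>) powr (n + 2 - a)"
proof -
  have nx: "norm x = \<rho>" using assms(2) by (simp add: x_def)
  have xz: "x \<noteq> \<zeta>" using nx assms by auto
  define d where "d = norm (x - \<zeta>)"
  have d: "d > 0" using xz by (simp add: d_def)
  have a12: "(axis i1 1 :: real^'n) \<bullet> axis i2 1 = 0" using assms(1) by (simp add: inner_axis_axis)
  have a11: "(axis i1 1 :: real^'n) \<bullet> axis i1 1 = 1" by (simp add: inner_axis_axis)
  have zl: "\<zeta> \<bullet> l = cos \<beta> * \<zeta> $ i1 + sin \<beta> * \<zeta> $ i2"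
    by (simp add: l_def inner_add_right inner_axis)
  have xl: "x \<bullet> l = \<rho> * cos \<beta>"
    by (simp add: x_def l_def inner_add_right a11 a12)
  have il: "(x - \<zeta>) \<bullet> l = \<rho> * cos \<beta> - \<zeta> $ i1 * cos \<beta> - \<zeta> $ i2 * sin \<beta>"
    by (simp add: inner_diff_left xl zl algebra_simps)
  have dd: "d\<^sup>2 = 1 + \<rho>\<^sup>2 - 2 * \<rho> * \<zeta> $ i1"
  proof -
    have "d\<^sup>2 = (x - \<zeta>) \<bullet> (x - \<zeta>)" by (simp add: d_def power2_norm_eq_inner)
    also have "\<dots> = x \<bullet> x - 2 * (x \<bullet> \<zeta>) + \<zeta> \<bullet> \<zeta>" by (simp add: inner_diff_left inner_diff_right inner_commute)
    also have "x \<bullet> x = \<rho>\<^sup>2" using nx by (simp add: power2_norm_eq_inner[symmetric])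
    also have "\<zeta> \<bullet> \<zeta> = 1" using assms(4) by (simp add: power2_norm_eq_inner[symmetric])
    also have "x \<bullet> \<zeta> = \<rho> * \<zeta> $ i1" by (simp add: x_def inner_axis' inner_axis inner_commute)
    finally show ?thesis by simp
  qed
  define q where "q = 1 - \<rho>\<^sup>2"
  have G_eq: "Gr a x \<zeta> = C_const CARD('n) a *\<^sub>R
     ((q powr (1 - a) * ((a - n) * d powr (a - n - 1)) / d) *\<^sub>R (x - \<zeta>)
      + (d powr (a - n) * ((1 - a) * q powr (1 - a - 1)) * (- 2)) *\<^sub>R x)"
    unfolding Gr_def g1_def g2_def dg1_def dg2_def sgn_div_norm nx q_def d_def n_def
    by (simp add: scaleR_scaleR divide_inverse mult.assoc)
  have "Gr a x \<zeta> \<bullet> l = C_const CARD('n) a * ((q powr (1 - a) * ((a - n) * d powr (a - n - 1)) / d) * ((x - \<zeta>) \<bullet> l)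
      + (d powr (a - n) * ((1 - a) * q powr (1 - a - 1)) * (- 2)) * (x \<bullet> l))"
    unfolding G_eq by (simp only: inner_scaleR_left inner_add_left)
  also have "\<dots> = C_const CARD('n) a * (q powr (1 - a) * ((a - n) * d powr (a - n - 1)) * ((\<rho> * cos \<beta> - \<zeta> $ i1 * cos \<beta> - \<zeta> $ i2 * sin \<beta>) / d)
        + d powr (a - n) * ((1 - a) * q powr (1 - a - 1)) * (- 2 * (\<rho> * cos \<beta>)))"
    unfolding il xl by simp
  also have "\<dots> = C_const CARD('n) a * q powr (- a) *
      ((n - a) * (1 - \<rho>\<^sup>2) * sin \<beta> * \<zeta> $ i2
        - ((2 - 3*a + n) * \<rho> + (2 - a - n) * \<rho> ^ 3
           + (a - n + (-4 + 3*a + n) * \<rho>\<^sup>2) * \<zeta> $ i1) * cos \<beta>) / d powr (n + 2 - a)"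
    by (rule alg_id[OF q_def _ d dd]) (use assms in \<open>simp add: q_def abs_square_less_1\<close>)
  finally show ?thesis by (simp add: d_def q_def)
qed



lemma Gr_cont_S:
  fixes x :: "real^'n"
  assumes "norm x < 1"
  shows "continuous_on (sphere 0 1) (\<lambda>z. Gr a x z)"
proof -
  have "continuous_on (sphere 0 1) (\<lambda>z. (x, z))" by (intro continuous_intros)
  moreover have "(\<lambda>z. (x, z)) ` sphere 0 1 \<subseteq> {p::(real^'n)\<times>(real^'n). norm (fst p) < 1 \<and> fst p \<noteq> snd p}"
    using assms by auto
  ultimately show ?thesis
    using continuous_on_compose2[OF Gr_cont, of "sphere 0 1" "\<lambda>z. (x, z)"] by auto
qed

lemma intG_lem:
  fixes x :: "real^'n"
  assumes x: "norm x < 1" and \<phi>: "integrable sphere_measure \<phi>"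
  shows "integrable sphere_measure (\<lambda>z. \<phi> z *\<^sub>R Gr a x z)"
proof -
  obtain BG where BG: "\<And>z. z \<in> sphere 0 1 \<Longrightarrow> norm (Gr a x z) \<le> BG"
    using compact_imp_bounded[OF compact_continuous_image[OF Gr_cont_S[OF x, where a=a] compact_sphere]]
    unfolding bounded_iff image_iff by blast
  have measG: "(\<lambda>z. Gr a x z) \<in> borel_measurable sphere_measure"
    using meas_Gr measurable_cong_sets[OF sm_sets refl] by blast
  show ?thesis
  proof (rule int_bdd_vec[OF \<phi> measG])
    show "AE z in sphere_measure. norm (Gr a x z) \<le> BG"
      using sm_AE apply (rule eventually_mono) using BG by auto
  qed
qed

lemma fd_eq:
  fixes x :: "real^'n"
  assumes x: "norm x < 1" and \<phi>: "integrable sphere_measure \<phi>"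
  shows "frechet_derivative (P_transform a \<phi>) (at x) l = (\<integral>z. (Gr a x z \<bullet> l) * \<phi> z \<partial>sphere_measure)"
proof -
  have "frechet_derivative (P_transform a \<phi>) (at x) = (\<lambda>v. (\<integral>z. \<phi> z *\<^sub>R Gr a x z \<partial>sphere_measure) \<bullet> v)"
    using frechet_derivative_at[OF deriv_int[OF x \<phi>]] by simp
  then have "frechet_derivative (P_transform a \<phi>) (at x) l = (\<integral>z. \<phi> z *\<^sub>R Gr a x z \<partial>sphere_measure) \<bullet> l"
    by simp
  also have "\<dots> = (\<integral>z. (\<phi> z *\<^sub>R Gr a x z) \<bullet> l \<partial>sphere_measure)"
    by (rule integral_inner_left[symmetric]) (rule intG_lem[OF x \<phi>])
  finally show ?thesis by (simp add: mult.commute)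
qed



theorem lemma3p2:
  fixes \<alpha> \<beta> \<rho> :: real and i1 i2 :: "'n::finite"
  assumes "CARD('n) \<ge> 3" and "i1 \<noteq> i2"
    and "\<alpha> < 1" and "0 \<le> \<beta>" and "\<beta> \<le> pi" and "0 \<le> \<rho>" and "\<rho> < 1"
  defines "x \<equiv> \<rho> *\<^sub>R (axis i1 1 :: real^'n)"
    and "l \<equiv> cos \<beta> *\<^sub>R (axis i1 1 :: real^'n) + sin \<beta> *\<^sub>R axis i2 1"
    and "n \<equiv> real CARD('n)"
  defines "Cstar \<equiv> (SUP \<zeta>\<in>sphere (0::real^'n) 1.
      \<bar>(n - \<alpha>) * (1 - \<rho>\<^sup>2) * sin \<beta> * \<zeta> $ i2
        - ((2 - 3*\<alpha> + n) * \<rho> + (2 - \<alpha> - n) * \<rho> ^ 3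
           + (\<alpha> - n + (-4 + 3*\<alpha> + n) * \<rho>\<^sup>2) * \<zeta> $ i1) * cos \<beta>\<bar>
      / norm (x - \<zeta>) powr (n + 2 - \<alpha>))"
  shows "C_const CARD('n) \<alpha> * (1 - \<rho>\<^sup>2) powr (-\<alpha>) * Cstar \<in> admissible_consts \<alpha> x l
       \<and> (\<forall>C \<in> admissible_consts \<alpha> x l. C_const CARD('n) \<alpha> * (1 - \<rho>\<^sup>2) powr (-\<alpha>) * Cstar \<le> C)"
proof -
  define M where "M = (sphere_measure :: (real^'n) measure)"
  define S where "S = sphere (0::real^'n) 1"
  define c where "c = C_const CARD('n) \<alpha>"
  define q where "q = (1 - \<rho>\<^sup>2) powr (-\<alpha>)"
  define K where "K = (\<lambda>z. Gr \<alpha> x z \<bullet> l)"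
  define Q where "Q = (\<lambda>\<zeta>::real^'n. \<bar>(n - \<alpha>) * (1 - \<rho>\<^sup>2) * sin \<beta> * \<zeta> $ i2
        - ((2 - 3*\<alpha> + n) * \<rho> + (2 - \<alpha> - n) * \<rho> ^ 3
           + (\<alpha> - n + (-4 + 3*\<alpha> + n) * \<rho>\<^sup>2) * \<zeta> $ i1) * cos \<beta>\<bar>
      / norm (x - \<zeta>) powr (n + 2 - \<alpha>))"
  have n3: "n \<ge> 3" using assms(1) by (simp add: n_def)
  have c_pos: "c > 0"
    unfolding c_def C_const_def using n3 assms(3)
    by (intro divide_pos_pos mult_pos_pos Gamma_real_pos) (auto simp: n_def)
  have q_pos: "q > 0" unfolding q_def using assms(6,7) by (simp add: abs_square_less_1 power2_eq_1_iff)
  have nx: "norm x = \<rho>" using assms(6) by (simp add: x_def)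
  have x1: "norm x < 1" using nx assms(7) by simp
  have spM[simp]: "space M = UNIV" by (simp add: M_def)
  have AE1: "AE z in M. norm z = 1" unfolding M_def by (rule sm_AE)
  have KQ: "\<bar>K z\<bar> = c * q * Q z" if z: "norm z = 1" for z
  proof -
    have xz: "norm (x - z) > 0" using nx z assms(7) by auto
    have "K z = c * q * ((n - \<alpha>) * (1 - \<rho>\<^sup>2) * sin \<beta> * z $ i2
        - ((2 - 3*\<alpha> + n) * \<rho> + (2 - \<alpha> - n) * \<rho> ^ 3
           + (\<alpha> - n + (-4 + 3*\<alpha> + n) * \<rho>\<^sup>2) * z $ i1) * cos \<beta>) / norm (x - z) powr (n + 2 - \<alpha>)"
      unfolding K_def c_def q_def x_def l_def n_def
      by (rule Gr_l[OF assms(2,6,7) z])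
    then show ?thesis using c_pos q_pos xz
      by (simp add: Q_def abs_mult abs_divide)
  qed
  have contQ: "continuous_on S Q"
    unfolding Q_def S_def
    apply (intro continuous_intros)
    using nx assms(7) by auto
  have Sne: "S \<noteq> {}" unfolding S_def by (metis empty_iff norm_axis_1 mem_sphere_0)
  obtain z0 where z0: "z0 \<in> S" and z0max: "\<And>z. z \<in> S \<Longrightarrow> Q z \<le> Q z0"
    using continuous_attains_sup[OF _ Sne contQ] unfolding S_def by auto
  have Cstar_eq: "Cstar = Q z0"
  proof -
    have "Cstar = Sup (Q ` S)" unfolding Cstar_def Q_def S_def by simp
    also have "\<dots> = Q z0" using z0 z0max by (intro cSup_eq_maximum) auto
    finally show ?thesis .
  qed
  define Km where "Km = c * q * Cstar"
  have Km_eq: "C_const CARD('n) \<alpha> * (1 - \<rho>\<^sup>2) powr (-\<alpha>) * Cstar = Km"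
    by (simp add: Km_def c_def q_def)
  have Kb: "\<bar>K z\<bar> \<le> Km" if "norm z = 1" for z
    using KQ[OF that] z0max[of z] that c_pos q_pos unfolding Km_def Cstar_eq S_def
    by (simp add: mult_left_mono)
  have Kz0: "\<bar>K z0\<bar> = Km" using KQ z0 unfolding Km_def Cstar_eq S_def by simp
  have measK: "K \<in> borel_measurable M"
  proof -
    have "(\<lambda>z. Gr \<alpha> x z) \<in> borel_measurable M"
      using meas_Gr measurable_cong_sets[OF sm_sets refl] unfolding M_def by blast
    then show ?thesis unfolding K_def by measurable
  qed
  have intK: "integrable M (\<lambda>z. K z * \<phi> z)" if "integrable M \<phi>" for \<phi>
  proof (rule int_bdd[OF that measK])
    show "AE z in M. \<bar>K z\<bar> \<le> Km" using AE1 by (rule eventually_mono) (rule Kb)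
  qed
  have fd: "frechet_derivative (P_transform \<alpha> \<phi>) (at x) l = (\<integral>z. K z * \<phi> z \<partial>M)"
    if "integrable M \<phi>" for \<phi>
    unfolding K_def M_def by (rule fd_eq[OF x1]) (use that in \<open>simp add: M_def\<close>)
  have part1: "Km \<in> admissible_consts \<alpha> x l"
    unfolding admissible_consts_def
  proof (intro CollectI allI impI)
    fix \<phi> :: "real^'n \<Rightarrow> real" assume \<phi>: "integrable sphere_measure \<phi>"
    then have \<phi>M: "integrable M \<phi>" by (simp add: M_def)
    have "\<bar>frechet_derivative (P_transform \<alpha> \<phi>) (at x) l\<bar> = \<bar>\<integral>z. K z * \<phi> z \<partial>M\<bar>"
      by (simp add: fd[OF \<phi>M])
    also have "\<dots> \<le> (\<integral>z. \<bar>K z * \<phi> z\<bar> \<partial>M)" by (rule integral_abs_bound)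
    also have "\<dots> \<le> (\<integral>z. Km * \<bar>\<phi> z\<bar> \<partial>M)"
    proof (rule integral_mono_AE)
      show "integrable M (\<lambda>z. \<bar>K z * \<phi> z\<bar>)" using intK[OF \<phi>M] by simp
      show "integrable M (\<lambda>z. Km * \<bar>\<phi> z\<bar>)" using \<phi>M by simp
      show "AE z in M. \<bar>K z * \<phi> z\<bar> \<le> Km * \<bar>\<phi> z\<bar>"
        using AE1 by (rule eventually_mono) (auto simp: abs_mult intro!: mult_right_mono Kb)
    qed
    also have "\<dots> = Km * L1_norm \<phi>" by (simp add: L1_norm_def M_def)
    finally show "\<bar>frechet_derivative (P_transform \<alpha> \<phi>) (at x) l\<bar> \<le> Km * L1_norm \<phi>" .
  qed
  have part2: "Km \<le> C" if C: "C \<in> admissible_consts \<alpha> x l" for C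
  proof (rule ccontr)
    assume "\<not> Km \<le> C"
    then have CK: "C < Km" by simp
    define \<eta> where "\<eta> = (Km - C) / 2"
    have \<eta>: "\<eta> > 0" using CK by (simp add: \<eta>_def)
    have contK: "continuous_on S K"
      unfolding K_def S_def by (intro continuous_intros Gr_cont_S[OF x1])
    obtain \<delta> where \<delta>: "\<delta> > 0" and \<delta>K: "\<And>z. z \<in> S \<Longrightarrow> dist z z0 < \<delta> \<Longrightarrow> dist (K z) (K z0) < \<eta>"
      using contK z0 \<eta> unfolding continuous_on_iff by metis
    define s :: real where "s = (if K z0 \<ge> 0 then 1 else -1)"
    have sK: "s * K z0 = Km" using Kz0 by (auto simp: s_def)
    have s1: "\<bar>s\<bar> = 1" by (simp add: s_def)
    define B where "B = ball z0 \<delta>"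
    define \<phi> where "\<phi> = (\<lambda>z. s * indicator B z :: real)"
    have Bsets: "B \<in> sets M" by (simp add: B_def M_def)
    interpret P: prob_space M unfolding M_def by (rule sm_prob)
    have Bfin: "emeasure M B < \<infinity>" by (simp add: P.emeasure_finite less_top[symmetric])
    have intI: "integrable M (indicator B :: real^'n \<Rightarrow> real)" using Bsets Bfin by simp
    have \<phi>M: "integrable M \<phi>" unfolding \<phi>_def using intI by simp
    have \<phi>S: "integrable sphere_measure \<phi>" using \<phi>M by (simp add: M_def)
    have mu_pos: "measure M B > 0"
    proof -
      have "emeasure M B > 0" unfolding M_def B_def
        using sm_ball_pos[OF _ \<delta>] z0 by (simp add: S_def)
      then show ?thesis using Bfin by (simp add: P.emeasure_eq_measure)
    qed
    have L1: "L1_norm \<phi> = measure M B"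
    proof -
      have "L1_norm \<phi> = (\<integral>z. indicator B z \<partial>M)"
        unfolding L1_norm_def M_def[symmetric] \<phi>_def using s1 by (simp add: abs_mult)
      then show ?thesis by simp
    qed
    have lower: "(Km - \<eta>) * measure M B \<le> (\<integral>z. K z * \<phi> z \<partial>M)"
    proof -
      have "(Km - \<eta>) * measure M B = (\<integral>z. (Km - \<eta>) * indicator B z \<partial>M)" by simp
      also have "\<dots> \<le> (\<integral>z. K z * \<phi> z \<partial>M)"
      proof (rule integral_mono_AE)
        show "integrable M (\<lambda>z. (Km - \<eta>) * indicator B z)" using intI by simp
        show "integrable M (\<lambda>z. K z * \<phi> z)" by (rule intK[OF \<phi>M])
        show "AE z in M. (Km - \<eta>) * indicator B z \<le> K z * \<phi> z"
          using AE1
        proof (rule eventually_mono)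
          fix z :: "real^'n" assume z: "norm z = 1"
          show "(Km - \<eta>) * indicator B z \<le> K z * \<phi> z"
          proof (cases "z \<in> B")
            case True
            then have "dist (K z) (K z0) < \<eta>" using \<delta>K[of z] z by (simp add: S_def B_def dist_commute)
            then have "\<bar>K z - K z0\<bar> < \<eta>" by (simp add: dist_real_def)
            then have "s * K z \<ge> s * K z0 - \<eta>" using s1 by (auto simp: s_def)
            then show ?thesis using True sK by (simp add: \<phi>_def mult.commute)
          next
            case False
            then show ?thesis by (simp add: \<phi>_def)
          qed
        qed
      qed
      finally show ?thesis .
    qed
    have "(\<integral>z. K z * \<phi> z \<partial>M) \<le> C * measure M B"
    proof -
      have "\<bar>frechet_derivative (P_transform \<alpha> \<phi>) (at x) l\<bar> \<le> C * L1_norm \<phi>"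
        using C \<phi>S unfolding admissible_consts_def by blast
      then show ?thesis using fd[OF \<phi>M] L1 by simp
    qed
    with lower have "(Km - \<eta>) * measure M B \<le> C * measure M B" by linarith
    then have "Km - \<eta> \<le> C" using mu_pos by simp
    then show False using CK unfolding \<eta>_def by (simp add: field_simps)
  qed
  show ?thesis unfolding Km_eq using part1 part2 by blast
qed

end
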